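(* Let $s\colon M\to TM\setminus 0$ be a smooth section such that the pullback metric $s^*g$, with components $(s^*g)_{\alpha\beta}(x)=g_{\alpha\beta}(x,s(x))$, is non-degenerate (this holds since $g$ is non-degenerate). Let $\nabla^{s^*g}$ be the Levi-Civita connection of $s^*g$ on $M$, with coefficients $(\nabla^{s^*g})^\alpha_{\beta\gamma}$, and let $\overset{s}{\nabla}{}^{\mathrm{ChR}}$ be the linear connection on $M$ with coefficients $\Gamma^\alpha_{\beta\gamma}(x,s(x))$ (the pullback of the Chern–Rund connection). Then in every chart \[ (\nabla^{s^*g})^\alpha_{\beta\gamma}-\Gamma^\alpha_{\beta\gamma}(x,s(x))=C^\alpha_{\mu\gamma}\,D_\beta s^\mu+C^\alpha_{\mu\beta}\,D_\gamma s^\mu-C_{\mu\beta\gamma}\,g^{\alpha\delta}D_\delta s^\mu, \] where all of $C$, $g$, $g^{-1}$ are evaluated at $(x,s(x))$. Equivalently, for all vector fields $X,Y$ on $M$, \[ \nabla^{s^*g}_XY-\overset{s}{\nabla}{}^{\mathrm{ChR}}_XY=C(D_Ys,X)+C(D_Xs,Y)-g\big(C(X,Y),Ds\big)^\sharp, \] where $C(U,V)$ denotes the vector with components $C^\alpha_{\mu\nu}U^\mu V^\nu$, $g(C(X,Y),Ds)^\sharp$ the vector with components $g^{\alpha\delta}C_{\mu\beta\gamma}X^\beta Y^\gamma D_\delta s^\mu$, and $C$, $g$ stand for their pullbacks by $s$.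
   Context: $M$ is a smooth $n$-manifold, $E=TM\setminus 0$, and $\{x^\mu,y^\mu\}$ are the coordinates on $TM$ induced by coordinates $\{x^\mu\}$ on $M$. A pseudo-Finsler Lagrangian is a smooth $\mathscr{L}\colon E\to\mathbb{R}$ with $\mathscr{L}(x,ty)=t^2\mathscr{L}(x,y)$ for all $t>0$, whose Finsler metric $g_{\mu\nu}=\partial^2\mathscr{L}/\partial y^\mu\partial y^\nu$ is non-degenerate (any signature); $g^{\mu\nu}$ is its inverse and indices are raised/lowered with $g$. Cartan torsion: $C_{\alpha\beta\gamma}=\tfrac12\partial g_{\beta\gamma}/\partial y^\alpha$. Spray: $2G^\alpha=g^{\alpha\delta}\big(\frac{\partial^2\mathscr{L}}{\partial x^\gamma\partial y^\delta}y^\gamma-\frac{\partial\mathscr{L}}{\partial x^\delta}\big)$; nonlinear connection $N^\alpha_\mu=\partial G^\alpha/\partial y^\mu$; $\frac{\delta}{\delta x^\mu}=\frac{\partial}{\partial x^\mu}-N^\nu_\mu\frac{\partial}{\partial y^\nu}$. Chern–Rund (= Cartan horizontal) coefficients: $\Gamma^\alpha_{\beta\gamma}=\tfrac12 g^{\alpha\sigma}\big(\frac{\delta g_{\sigma\gamma}}{\delta x^\beta}+\frac{\delta g_{\sigma\beta}}{\delta x^\gamma}-\frac{\delta g_{\beta\gamma}}{\delta x^\sigma}\big)$. For a section $s\colon M\to E$, $D_\alpha s^\mu=\frac{\partial s^\mu}{\partial x^\alpha}+N^\mu_\alpha(x,s(x))$ and $D_\xi s^\mu=\xi^\alpha D_\alpha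 s^\mu$. *)

theory Defs
  imports "HOL-Analysis.Analysis"
begin

coinductive smooth_on :: "'a::euclidean_space set \<Rightarrow> ('a \<Rightarrow> 'b::real_normed_vector) \<Rightarrow> bool"
  for S where
  "f differentiable_on S \<Longrightarrow> (\<forall>v. smooth_on S (\<lambda>x. frechet_derivative f (at x) v))
   \<Longrightarrow> smooth_on S f"

text \<open>Chart coordinates: points of TU are pairs (x,y) of coordinate vectors.\<close>
definition pdx :: "((real^'n) \<times> (real^'n) \<Rightarrow> real) \<Rightarrow> 'n \<Rightarrow> (real^'n) \<times> (real^'n) \<Rightarrow> real" where
  "pdx F i p = frechet_derivative F (at p) (axis i 1, 0)"

definition pdy :: "((real^'n) \<times> (real^'n) \<Rightarrow> real) \<Rightarrow> 'n \<Rightarrow> (real^'n) \<times> (real^'n) \<Rightarrow> real" where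
  "pdy F i p = frechet_derivative F (at p) (0, axis i 1)"

definition pd :: "(real^'n \<Rightarrow> real) \<Rightarrow> 'n \<Rightarrow> real^'n \<Rightarrow> real" where
  "pd f i x = frechet_derivative f (at x) (axis i 1)"

definition fmetric :: "((real^'n) \<times> (real^'n) \<Rightarrow> real) \<Rightarrow> 'n \<Rightarrow> 'n \<Rightarrow> (real^'n) \<times> (real^'n) \<Rightarrow> real" where
  "fmetric L \<mu> \<nu> p = pdy (pdy L \<nu>) \<mu> p"

definition fmat :: "((real^'n) \<times> (real^'n) \<Rightarrow> real) \<Rightarrow> (real^'n) \<times> (real^'n) \<Rightarrow> real^'n^'n" where
  "fmat L p = (\<chi> \<mu> \<nu>. fmetric L \<mu> \<nu> p)"

definition finv :: "((real^'n) \<times> (real^'n) \<Rightarrow> real) \<Rightarrow> 'n \<Rightarrow> 'n \<Rightarrow> (real^'n) \<times> (real^'n) \<Rightarrow> real" where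
  "finv L \<mu> \<nu> p = matrix_inv (fmat L p) $ \<mu> $ \<nu>"

definition cartan :: "((real^'n) \<times> (real^'n) \<Rightarrow> real) \<Rightarrow> 'n \<Rightarrow> 'n \<Rightarrow> 'n \<Rightarrow> (real^'n) \<times> (real^'n) \<Rightarrow> real" where
  "cartan L \<alpha> \<beta> \<gamma> p = 1/2 * pdy (fmetric L \<beta> \<gamma>) \<alpha> p"

definition cartan_up :: "((real^'n) \<times> (real^'n) \<Rightarrow> real) \<Rightarrow> 'n \<Rightarrow> 'n \<Rightarrow> 'n \<Rightarrow> (real^'n) \<times> (real^'n) \<Rightarrow> real" where
  "cartan_up L \<alpha> \<mu> \<gamma> p = (\<Sum>\<delta>\<in>UNIV. finv L \<alpha> \<delta> p * cartan L \<delta> \<mu> \<gamma> p)"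

definition spray :: "((real^'n) \<times> (real^'n) \<Rightarrow> real) \<Rightarrow> 'n \<Rightarrow> (real^'n) \<times> (real^'n) \<Rightarrow> real" where
  "spray L \<alpha> p = 1/2 * (\<Sum>\<delta>\<in>UNIV. finv L \<alpha> \<delta> p *
      ((\<Sum>\<gamma>\<in>UNIV. pdx (pdy L \<delta>) \<gamma> p * (snd p $ \<gamma>)) - pdx L \<delta> p))"

definition nlconn :: "((real^'n) \<times> (real^'n) \<Rightarrow> real) \<Rightarrow> 'n \<Rightarrow> 'n \<Rightarrow> (real^'n) \<times> (real^'n) \<Rightarrow> real" where
  "nlconn L \<alpha> \<mu> p = pdy (spray L \<alpha>) \<mu> p"

definition hderiv :: "((real^'n) \<times> (real^'n) \<Rightarrow> real) \<Rightarrow> ((real^'n) \<times> (real^'n) \<Rightarrow> real) \<Rightarrow> 'n \<Rightarrow> (real^'n) \<times> (real^'n) \<Rightarrow> real" where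
  "hderiv L f \<mu> p = pdx f \<mu> p - (\<Sum>\<nu>\<in>UNIV. nlconn L \<nu> \<mu> p * pdy f \<nu> p)"

definition chern_rund :: "((real^'n) \<times> (real^'n) \<Rightarrow> real) \<Rightarrow> 'n \<Rightarrow> 'n \<Rightarrow> 'n \<Rightarrow> (real^'n) \<times> (real^'n) \<Rightarrow> real" where
  "chern_rund L \<alpha> \<beta> \<gamma> p = 1/2 * (\<Sum>\<sigma>\<in>UNIV. finv L \<alpha> \<sigma> p *
      (hderiv L (fmetric L \<sigma> \<gamma>) \<beta> p + hderiv L (fmetric L \<sigma> \<beta>) \<gamma> p
       - hderiv L (fmetric L \<beta> \<gamma>) \<sigma> p))"

definition Dsec :: "((real^'n) \<times> (real^'n) \<Rightarrow> real) \<Rightarrow> (real^'n \<Rightarrow> real^'n) \<Rightarrow> 'n \<Rightarrow> 'n \<Rightarrow> real^'n \<Rightarrow> real" where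
  "Dsec L s \<alpha> \<mu> x = pd (\<lambda>z. s z $ \<mu>) \<alpha> x + nlconn L \<mu> \<alpha> (x, s x)"

definition pbmetric :: "((real^'n) \<times> (real^'n) \<Rightarrow> real) \<Rightarrow> (real^'n \<Rightarrow> real^'n) \<Rightarrow> 'n \<Rightarrow> 'n \<Rightarrow> real^'n \<Rightarrow> real" where
  "pbmetric L s \<alpha> \<beta> x = fmetric L \<alpha> \<beta> (x, s x)"

definition levi_civita :: "('n \<Rightarrow> 'n \<Rightarrow> real^'n \<Rightarrow> real) \<Rightarrow> 'n \<Rightarrow> 'n \<Rightarrow> 'n \<Rightarrow> real^'n \<Rightarrow> real" where
  "levi_civita h \<alpha> \<beta> \<gamma> x = 1/2 * (\<Sum>\<sigma>\<in>UNIV. matrix_inv (\<chi> i j. h i j x) $ \<alpha> $ \<sigma> *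
      (pd (h \<sigma> \<gamma>) \<beta> x + pd (h \<sigma> \<beta>) \<gamma> x - pd (h \<beta> \<gamma>) \<sigma> x))"

end

theory Submission
  imports Defs
begin

lemma smooth_diff: "smooth_on S f \<Longrightarrow> f differentiable_on S"
  by (erule smooth_on.cases) auto
lemma smooth_deriv: "smooth_on S f \<Longrightarrow> smooth_on S (\<lambda>x. frechet_derivative f (at x) v)"
  by (erule smooth_on.cases) auto
lemma smooth_at: "open S \<Longrightarrow> smooth_on S f \<Longrightarrow> x \<in> S \<Longrightarrow> f differentiable (at x)"
  using smooth_diff differentiable_on_eq_differentiable_at by blast
lemma smooth_cont: "smooth_on S f \<Longrightarrow> continuous_on S f"
  using smooth_diff differentiable_imp_continuous_on by blast

lemma dir_deriv:
  fixes G :: "'a::real_normed_vector \<Rightarrow> real"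
  assumes "G differentiable (at (q + r *\<^sub>R w))"
  shows "((\<lambda>r. G (q + r *\<^sub>R w)) has_real_derivative frechet_derivative G (at (q + r *\<^sub>R w)) w) (at r)"
proof -
  let ?G' = "frechet_derivative G (at (q + r *\<^sub>R w))"
  have G: "(G has_derivative ?G') (at (q + r *\<^sub>R w))"
    using assms frechet_derivative_works by blast
  have l: "linear ?G'" using G has_derivative_linear by blast
  have "((\<lambda>r. q + r *\<^sub>R w) has_derivative (\<lambda>h. h *\<^sub>R w)) (at r)"
    by (auto intro!: derivative_eq_intros)
  from has_derivative_compose[OF this G]
  have "((\<lambda>r. G (q + r *\<^sub>R w)) has_derivative (\<lambda>h. ?G' (h *\<^sub>R w))) (at r)" by simp
  moreover have "(\<lambda>h. ?G' (h *\<^sub>R w)) = (*) (?G' w)"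
    using linear_scale[OF l] by (auto simp: mult.commute)
  ultimately show ?thesis by (simp add: has_field_derivative_def)
qed

lemma mvt_dir:
  fixes G :: "'a::real_normed_vector \<Rightarrow> real"
  assumes "0 < t" "\<And>r. 0 \<le> r \<Longrightarrow> r \<le> t \<Longrightarrow> G differentiable (at (q + r *\<^sub>R w))"
  shows "\<exists>r. 0 < r \<and> r < t \<and> G (q + t *\<^sub>R w) - G q = t * frechet_derivative G (at (q + r *\<^sub>R w)) w"
proof -
  from MVT2[of 0 t "\<lambda>r. G (q + r *\<^sub>R w)" "\<lambda>r. frechet_derivative G (at (q + r *\<^sub>R w)) w"]
  show ?thesis using assms dir_deriv by force
qed

lemma schwarz_key:
  fixes G :: "'a::euclidean_space \<Rightarrow> real"
  assumes S: "open S" and G: "smooth_on S G"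
    and t: "0 < t" and B: "ball p \<delta> \<subseteq> S" and td: "t * (norm a + norm b) < \<delta>"
  shows "\<exists>q. dist q p < \<delta> \<and> G (p + t *\<^sub>R a + t *\<^sub>R b) - G (p + t *\<^sub>R a) - G (p + t *\<^sub>R b) + G p
           = t * t * frechet_derivative (\<lambda>q. frechet_derivative G (at q) a) (at q) b"
proof -
  define Du where "Du = (\<lambda>q. frechet_derivative G (at q) a)"
  have Dus: "smooth_on S Du" unfolding Du_def by (rule smooth_deriv[OF G])
  have inb: "dist (p + r *\<^sub>R a + r' *\<^sub>R b) p < \<delta>" if "0 \<le> r" "r \<le> t" "0 \<le> r'" "r' \<le> t" for r r'
  proof -
    have "dist (p + r *\<^sub>R a + r' *\<^sub>R b) p = norm (r *\<^sub>R a + r' *\<^sub>R b)" by (simp add: dist_norm)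
    also have "\<dots> \<le> r * norm a + r' * norm b"
      using norm_triangle_ineq[of "r *\<^sub>R a" "r' *\<^sub>R b"] that by simp
    also have "\<dots> \<le> t * norm a + t * norm b"
      using that by (intro add_mono mult_right_mono) auto
    finally show ?thesis using td by (simp add: distrib_left)
  qed
  have inS: "p + r *\<^sub>R a + r' *\<^sub>R b \<in> S" if "0 \<le> r" "r \<le> t" "0 \<le> r'" "r' \<le> t" for r r'
    using inb[OF that] B by (auto simp: dist_commute)
  have Gd: "G differentiable (at (p + r *\<^sub>R a + r' *\<^sub>R b))" if "0 \<le> r" "r \<le> t" "0 \<le> r'" "r' \<le> t" for r r'
    using smooth_at[OF S G inS[OF that]] .
  have Dud: "Du differentiable (at (p + r *\<^sub>R a + r' *\<^sub>R b))" if "0 \<le> r" "r \<le> t" "0 \<le> r'" "r' \<le> t" for r r'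
    using smooth_at[OF S Dus inS[OF that]] .
  have d1: "((\<lambda>r. G ((p + t *\<^sub>R b) + r *\<^sub>R a) - G (p + r *\<^sub>R a)) has_real_derivative
     (Du (p + t *\<^sub>R b + r *\<^sub>R a) - Du (p + r *\<^sub>R a))) (at r)" if "0 \<le> r" "r \<le> t" for r
  proof -
    have a1: "G differentiable (at ((p + t *\<^sub>R b) + r *\<^sub>R a))"
      using Gd[of r t] that t by (simp add: add_ac)
    have a2: "G differentiable (at (p + r *\<^sub>R a))"
      using Gd[of r 0] that t by simp
    show ?thesis unfolding Du_def
      by (intro DERIV_diff dir_deriv a1 a2)
  qed
  have "\<exists>z. 0 < z \<and> z < t \<and> (G ((p + t *\<^sub>R b) + t *\<^sub>R a) - G (p + t *\<^sub>R a)) - (G ((p + t *\<^sub>R b) + 0 *\<^sub>R a) - G (p + 0 *\<^sub>R a))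
     = (t - 0) * (Du (p + t *\<^sub>R b + z *\<^sub>R a) - Du (p + z *\<^sub>R a))"
    by (rule MVT2[OF t d1])
  then obtain \<xi> where xi: "0 < \<xi>" "\<xi> < t" and e1:
    "(G ((p + t *\<^sub>R b) + t *\<^sub>R a) - G (p + t *\<^sub>R a)) - (G ((p + t *\<^sub>R b) + 0 *\<^sub>R a) - G (p + 0 *\<^sub>R a))
     = (t - 0) * (Du (p + t *\<^sub>R b + \<xi> *\<^sub>R a) - Du (p + \<xi> *\<^sub>R a))" by blast
  have "\<exists>r. 0 < r \<and> r < t \<and> Du ((p + \<xi> *\<^sub>R a) + t *\<^sub>R b) - Du (p + \<xi> *\<^sub>R a)
     = t * frechet_derivative Du (at ((p + \<xi> *\<^sub>R a) + r *\<^sub>R b)) b"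
    by (rule mvt_dir[OF t]) (rule Dud, use xi in auto)
  then obtain \<zeta> where ze: "0 < \<zeta>" "\<zeta> < t" and e2: "Du ((p + \<xi> *\<^sub>R a) + t *\<^sub>R b) - Du (p + \<xi> *\<^sub>R a)
     = t * frechet_derivative Du (at ((p + \<xi> *\<^sub>R a) + \<zeta> *\<^sub>R b)) b" by blast
  show ?thesis
  proof (intro exI conjI)
    show "dist (p + \<xi> *\<^sub>R a + \<zeta> *\<^sub>R b) p < \<delta>" using inb xi ze by auto
    have "G (p + t *\<^sub>R a + t *\<^sub>R b) - G (p + t *\<^sub>R a) - G (p + t *\<^sub>R b) + G p
      = t * (Du (p + t *\<^sub>R b + \<xi> *\<^sub>R a) - Du (p + \<xi> *\<^sub>R a))"
      using e1 by (simp add: add_ac)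
    also have "\<dots> = t * (t * frechet_derivative Du (at ((p + \<xi> *\<^sub>R a) + \<zeta> *\<^sub>R b)) b)"
      using e2 by (simp add: add_ac)
    finally show "G (p + t *\<^sub>R a + t *\<^sub>R b) - G (p + t *\<^sub>R a) - G (p + t *\<^sub>R b) + G p
      = t * t * frechet_derivative (\<lambda>q. frechet_derivative G (at q) a) (at (p + \<xi> *\<^sub>R a + \<zeta> *\<^sub>R b)) b"
      by (simp add: Du_def)
  qed
qed

lemma schwarz:
  fixes G :: "'a::euclidean_space \<Rightarrow> real"
  assumes S: "open S" and G: "smooth_on S G" and p: "p \<in> S"
  shows "frechet_derivative (\<lambda>q. frechet_derivative G (at q) u) (at p) v
       = frechet_derivative (\<lambda>q. frechet_derivative G (at q) v) (at p) u"
proof (rule ccontr)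
  define D where "D a b = (\<lambda>q. frechet_derivative (\<lambda>q. frechet_derivative G (at q) a) (at q) b)" for a b
  have Dc: "continuous (at p) (D a b)" for a b
  proof -
    have "smooth_on S (D a b)" unfolding D_def by (intro smooth_deriv G)
    then have "continuous_on S (D a b)" by (rule smooth_cont)
    then show ?thesis using S p continuous_on_eq_continuous_at by blast
  qed
  assume ne: "frechet_derivative (\<lambda>q. frechet_derivative G (at q) u) (at p) v
       \<noteq> frechet_derivative (\<lambda>q. frechet_derivative G (at q) v) (at p) u"
  define e where "e = \<bar>D u v p - D v u p\<bar>"
  have e: "e > 0" using ne by (simp add: e_def D_def)
  obtain d1 where d1: "d1 > 0" "\<And>y. dist y p < d1 \<Longrightarrow> dist (D u v y) (D u v p) < e/2"
    using Dc[of u v] e unfolding continuous_at_eps_delta by (metis half_gt_zero)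
  obtain d2 where d2: "d2 > 0" "\<And>y. dist y p < d2 \<Longrightarrow> dist (D v u y) (D v u p) < e/2"
    using Dc[of v u] e unfolding continuous_at_eps_delta by (metis half_gt_zero)
  obtain d0 where d0: "d0 > 0" "ball p d0 \<subseteq> S" using S p open_contains_ball by blast
  define \<delta> where "\<delta> = min d0 (min d1 d2)"
  have \<delta>: "\<delta> > 0" "ball p \<delta> \<subseteq> S" using d0 d1 d2 by (auto simp: \<delta>_def)
  define t where "t = \<delta> / (norm u + norm v + 1)"
  have t: "t > 0" using \<delta> by (simp add: t_def add_nonneg_pos)
  have td1: "t * (norm u + norm v) < \<delta>"
  proof -
    have "t * (norm u + norm v) < t * (norm u + norm v + 1)" using t by simp
    also have "\<dots> = \<delta>" proof - have "norm u + norm v + 1 \<noteq> 0" using norm_ge_zero[of u] norm_ge_zero[of v] by linarith then show ?thesis unfolding t_def by simp qed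
    finally show ?thesis .
  qed
  have td2: "t * (norm v + norm u) < \<delta>" using td1 by (simp add: add.commute)
  obtain q1 where q1: "dist q1 p < \<delta>" and e1: "G (p + t *\<^sub>R u + t *\<^sub>R v) - G (p + t *\<^sub>R u) - G (p + t *\<^sub>R v) + G p
           = t * t * D u v q1"
    using schwarz_key[OF S G t \<delta>(2) td1] unfolding D_def by blast
  obtain q2 where q2: "dist q2 p < \<delta>" and e2: "G (p + t *\<^sub>R v + t *\<^sub>R u) - G (p + t *\<^sub>R v) - G (p + t *\<^sub>R u) + G p
           = t * t * D v u q2"
    using schwarz_key[OF S G t \<delta>(2) td2] unfolding D_def by blast
  have "t * t * D u v q1 = t * t * D v u q2" using e1 e2 by (simp add: algebra_simps)
  then have eq: "D u v q1 = D v u q2" using t by simp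
  have "dist (D u v q1) (D u v p) < e/2" using d1 q1 by (auto simp: \<delta>_def)
  moreover have "dist (D v u q2) (D v u p) < e/2" using d2 q2 by (auto simp: \<delta>_def)
  ultimately show False using eq unfolding e_def dist_real_def by (simp add: abs_if split: if_splits)
qed

lemma chain_pd:
  fixes F :: "(real^'n) \<times> (real^'n) \<Rightarrow> real" and s :: "real^'n \<Rightarrow> real^'n"
  assumes F: "F differentiable (at (x, s x))" and sd: "\<And>\<mu>. (\<lambda>z. s z $ \<mu>) differentiable (at x)"
  shows "pd (\<lambda>z. F (z, s z)) \<beta> x = pdx F \<beta> (x, s x) + (\<Sum>\<mu>\<in>UNIV. pdy F \<mu> (x, s x) * pd (\<lambda>z. s z $ \<mu>) \<beta> x)"
proof -
  define F' where "F' = frechet_derivative F (at (x, s x))"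
  define sd' where "sd' \<mu> = frechet_derivative (\<lambda>z. s z $ \<mu>) (at x)" for \<mu>
  have hF: "(F has_derivative F') (at (x, s x))" using F frechet_derivative_works F'_def by blast
  have lF: "linear F'" using hF has_derivative_linear by blast
  have hs: "((\<lambda>z. s z $ \<mu>) has_derivative sd' \<mu>) (at x)" for \<mu>
    using sd[of \<mu>] frechet_derivative_works unfolding sd'_def by blast
  have seq: "s = (\<lambda>z. \<Sum>\<mu>\<in>UNIV. (s z $ \<mu>) *\<^sub>R axis \<mu> 1)"
    using basis_expansion[of "s z" for z] by (simp add: scalar_mult_eq_scaleR fun_eq_iff)
  have hs2: "(s has_derivative (\<lambda>h. \<Sum>\<mu>\<in>UNIV. sd' \<mu> h *\<^sub>R axis \<mu> (1::real))) (at x)"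
    by (subst seq) (intro has_derivative_sum has_derivative_scaleR_left hs)
  have hg: "((\<lambda>z. (z, s z)) has_derivative (\<lambda>h. (h, \<Sum>\<mu>\<in>UNIV. sd' \<mu> h *\<^sub>R axis \<mu> (1::real)))) (at x)"
    by (intro has_derivative_Pair has_derivative_ident hs2)
  have hc: "((\<lambda>z. F (z, s z)) has_derivative (\<lambda>h. F' (h, \<Sum>\<mu>\<in>UNIV. sd' \<mu> h *\<^sub>R axis \<mu> (1::real)))) (at x)"
    by (rule has_derivative_compose[OF hg hF])
  have fd: "frechet_derivative (\<lambda>z. F (z, s z)) (at x) = (\<lambda>h. F' (h, \<Sum>\<mu>\<in>UNIV. sd' \<mu> h *\<^sub>R axis \<mu> (1::real)))"
    by (rule frechet_derivative_at[OF hc, symmetric])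
  have l2: "linear (\<lambda>y. F' (0, y))"
  proof (rule linearI)
    fix a b :: "real^'n" and c :: real
    show "F' (0, a + b) = F' (0, a) + F' (0, b)"
      using linear_add[OF lF, of "(0,a)" "(0,b)"] by simp
    show "F' (0, c *\<^sub>R a) = c *\<^sub>R F' (0, a)"
      using linear_scale[OF lF, of c "(0,a)"] by simp
  qed
  have spl: "F' (h, y) = F' (h, 0) + F' (0, y)" for h y
    using linear_add[OF lF, of "(h,0)" "(0,y)"] by simp
  have "pd (\<lambda>z. F (z, s z)) \<beta> x = F' (axis \<beta> 1, 0) + F' (0, \<Sum>\<mu>\<in>UNIV. sd' \<mu> (axis \<beta> 1) *\<^sub>R axis \<mu> (1::real))"
    unfolding pd_def fd by (rule spl)
  also have "F' (0, \<Sum>\<mu>\<in>UNIV. sd' \<mu> (axis \<beta> 1) *\<^sub>R axis \<mu> (1::real))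
     = (\<Sum>\<mu>\<in>UNIV. sd' \<mu> (axis \<beta> 1) * F' (0, axis \<mu> 1))"
    using linear_sum[OF l2, of "\<lambda>\<mu>. sd' \<mu> (axis \<beta> 1) *\<^sub>R axis \<mu> (1::real)" UNIV] linear_scale[OF l2] by (simp add: o_def)
  finally have c: "pd (\<lambda>z. F (z, s z)) \<beta> x = F' (axis \<beta> 1, 0) + (\<Sum>\<mu>\<in>UNIV. sd' \<mu> (axis \<beta> 1) * F' (0, axis \<mu> 1))" .
  have e1: "pdx F \<beta> (x, s x) = F' (axis \<beta> 1, 0)" by (simp add: pdx_def F'_def)
  have e2: "pdy F \<mu> (x, s x) = F' (0, axis \<mu> 1)" for \<mu> by (simp add: pdy_def F'_def)
  have e3: "pd (\<lambda>z. s z $ \<mu>) \<beta> x = sd' \<mu> (axis \<beta> 1)" for \<mu> by (simp add: pd_def sd'_def)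
  show ?thesis unfolding c e1 e2 e3 by (simp add: mult.commute)
qed

theorem mainTheorem1:
  fixes U :: "(real^'n) set"
    and L :: "(real^'n) \<times> (real^'n) \<Rightarrow> real"
    and s :: "real^'n \<Rightarrow> real^'n"
  assumes U_open: "open U"
    and L_smooth: "smooth_on (U \<times> - {0}) L"
    and L_hom: "\<forall>x\<in>U. \<forall>y. y \<noteq> 0 \<longrightarrow> (\<forall>t>0. L (x, t *\<^sub>R y) = t\<^sup>2 * L (x, y))"
    and g_nondeg: "\<forall>x\<in>U. \<forall>y. y \<noteq> 0 \<longrightarrow> invertible (fmat L (x, y))"
    and s_smooth: "\<forall>\<mu>. smooth_on U (\<lambda>x. s x $ \<mu>)"
    and s_nonzero: "\<forall>x\<in>U. s x \<noteq> 0"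
    and pb_nondeg: "\<forall>x\<in>U. invertible (\<chi> i j. pbmetric L s i j x)"
    and x_in: "x \<in> U"
  shows "levi_civita (pbmetric L s) \<alpha> \<beta> \<gamma> x - chern_rund L \<alpha> \<beta> \<gamma> (x, s x)
         = (\<Sum>\<mu>\<in>UNIV. cartan_up L \<alpha> \<mu> \<gamma> (x, s x) * Dsec L s \<beta> \<mu> x
                     + cartan_up L \<alpha> \<mu> \<beta> (x, s x) * Dsec L s \<gamma> \<mu> x
                     - cartan L \<mu> \<beta> \<gamma> (x, s x) *
                         (\<Sum>\<delta>\<in>UNIV. finv L \<alpha> \<delta> (x, s x) * Dsec L s \<delta> \<mu> x))"
proof -
  define S where "S = U \<times> - {0::real^'n}"
  define P where "P = (x, s x)"
  have S: "open S" unfolding S_def using U_open by (intro open_Times) auto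
  have PS: "P \<in> S" using x_in s_nonzero by (auto simp: S_def P_def)
  have LS: "smooth_on S L" using L_smooth by (simp add: S_def)
  have pdyL: "pdy L \<nu> = (\<lambda>p. frechet_derivative L (at p) (0, axis \<nu> 1))" for \<nu>
    by (rule ext) (simp add: pdy_def)
  have pdyLs: "smooth_on S (pdy L \<nu>)" for \<nu> unfolding pdyL by (rule smooth_deriv[OF LS])
  have gm: "fmetric L \<mu> \<nu> = (\<lambda>p. frechet_derivative (pdy L \<nu>) (at p) (0, axis \<mu> 1))" for \<mu> \<nu>
    by (rule ext) (simp add: fmetric_def pdy_def)
  have gs: "smooth_on S (fmetric L \<mu> \<nu>)" for \<mu> \<nu> unfolding gm by (rule smooth_deriv[OF pdyLs])
  have gd: "fmetric L \<mu> \<nu> differentiable (at P)" for \<mu> \<nu> using smooth_at[OF S gs PS] .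
  have sd: "(\<lambda>z. s z $ \<mu>) differentiable (at x)" for \<mu>
    using smooth_at[OF U_open _ x_in] s_smooth by blast
  have csym: "cartan L a b c P = cartan L b a c P" for a b c
  proof -
    have sw: "frechet_derivative (fmetric L b c) (at P) (0, axis a 1) = frechet_derivative (fmetric L a c) (at P) (0, axis b 1)"
      using schwarz[OF S pdyLs[of c] PS, of "(0, axis b 1)" "(0, axis a 1)"] unfolding gm[symmetric] .
    show ?thesis using sw by (simp add: cartan_def pdy_def)
  qed
  have dh: "pd (pbmetric L s a b) c x = hderiv L (fmetric L a b) c P
      + 2 * (\<Sum>\<mu>\<in>UNIV. cartan L a \<mu> b P * Dsec L s c \<mu> x)" for a b c
  proof -
    have "pbmetric L s a b = (\<lambda>z. fmetric L a b (z, s z))" by (rule ext) (simp add: pbmetric_def)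
    then have "pd (pbmetric L s a b) c x = pdx (fmetric L a b) c P
        + (\<Sum>\<mu>\<in>UNIV. pdy (fmetric L a b) \<mu> P * pd (\<lambda>z. s z $ \<mu>) c x)"
      using chain_pd[OF gd[unfolded P_def] sd] by (simp add: P_def)
    also have "\<dots> = hderiv L (fmetric L a b) c P
        + (\<Sum>\<mu>\<in>UNIV. pdy (fmetric L a b) \<mu> P * Dsec L s c \<mu> x)"
      by (simp add: hderiv_def Dsec_def P_def distrib_left sum.distrib mult.commute)
    also have "(\<Sum>\<mu>\<in>UNIV. pdy (fmetric L a b) \<mu> P * Dsec L s c \<mu> x)
        = 2 * (\<Sum>\<mu>\<in>UNIV. cartan L a \<mu> b P * Dsec L s c \<mu> x)"
    proof -
      have "pdy (fmetric L a b) \<mu> P = 2 * cartan L a \<mu> b P" for \<mu>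
        using csym[of a \<mu> b] by (simp add: cartan_def)
      then show ?thesis by (simp add: sum_distrib_left mult.assoc)
    qed
    finally show ?thesis .
  qed
  have M: "(\<chi> i j. pbmetric L s i j x) = fmat L P"
    by (simp add: pbmetric_def fmat_def P_def)
  define fi where "fi \<sigma> = finv L \<alpha> \<sigma> P" for \<sigma>
  define C where "C a b c = cartan L a b c P" for a b c
  define D where "D a \<mu> = Dsec L s a \<mu> x" for a \<mu>
  define H where "H a b c = hderiv L (fmetric L a b) c P" for a b c
  define X where "X \<sigma> = (\<Sum>\<mu>\<in>UNIV. C \<sigma> \<mu> \<gamma> * D \<beta> \<mu> + C \<sigma> \<mu> \<beta> * D \<gamma> \<mu> - C \<mu> \<beta> \<gamma> * D \<sigma> \<mu>)" for \<sigma>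
  have CS: "C a b c = C b a c" for a b c unfolding C_def by (rule csym)
  have dh': "pd (pbmetric L s a b) c x = H a b c + 2 * (\<Sum>\<mu>\<in>UNIV. C a \<mu> b * D c \<mu>)" for a b c
    using dh unfolding H_def C_def D_def .
  have LC: "levi_civita (pbmetric L s) \<alpha> \<beta> \<gamma> x = 1/2 * (\<Sum>\<sigma>\<in>UNIV. fi \<sigma> *
      (H \<sigma> \<gamma> \<beta> + H \<sigma> \<beta> \<gamma> - H \<beta> \<gamma> \<sigma> + 2 * X \<sigma>))"
    unfolding levi_civita_def M dh' X_def
    by (simp add: fi_def finv_def CS[of \<beta>] sum.distrib sum_subtractf algebra_simps)
  have CR: "chern_rund L \<alpha> \<beta> \<gamma> (x, s x) = 1/2 * (\<Sum>\<sigma>\<in>UNIV. fi \<sigma> *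
      (H \<sigma> \<gamma> \<beta> + H \<sigma> \<beta> \<gamma> - H \<beta> \<gamma> \<sigma>))"
    unfolding chern_rund_def H_def fi_def P_def ..
  have "levi_civita (pbmetric L s) \<alpha> \<beta> \<gamma> x - chern_rund L \<alpha> \<beta> \<gamma> (x, s x)
      = (\<Sum>\<sigma>\<in>UNIV. fi \<sigma> * X \<sigma>)"
    unfolding LC CR by (simp add: sum_subtractf[symmetric] sum_distrib_left algebra_simps)
  also have "\<dots> = (\<Sum>\<sigma>\<in>UNIV. \<Sum>\<mu>\<in>UNIV. fi \<sigma> * C \<sigma> \<mu> \<gamma> * D \<beta> \<mu> + fi \<sigma> * C \<sigma> \<mu> \<beta> * D \<gamma> \<mu> - C \<mu> \<beta> \<gamma> * (fi \<sigma> * D \<sigma> \<mu>))"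
    unfolding X_def by (simp add: sum_distrib_left algebra_simps)
  also have "\<dots> = (\<Sum>\<mu>\<in>UNIV. \<Sum>\<sigma>\<in>UNIV. fi \<sigma> * C \<sigma> \<mu> \<gamma> * D \<beta> \<mu> + fi \<sigma> * C \<sigma> \<mu> \<beta> * D \<gamma> \<mu> - C \<mu> \<beta> \<gamma> * (fi \<sigma> * D \<sigma> \<mu>))"
    by (rule sum.swap)
  also have "\<dots> = (\<Sum>\<mu>\<in>UNIV. (\<Sum>\<sigma>\<in>UNIV. fi \<sigma> * C \<sigma> \<mu> \<gamma>) * D \<beta> \<mu>
        + (\<Sum>\<sigma>\<in>UNIV. fi \<sigma> * C \<sigma> \<mu> \<beta>) * D \<gamma> \<mu> - C \<mu> \<beta> \<gamma> * (\<Sum>\<sigma>\<in>UNIV. fi \<sigma> * D \<sigma> \<mu>))"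
    by (simp add: sum.distrib sum_subtractf sum_distrib_left sum_distrib_right)
  finally show ?thesis
    unfolding cartan_up_def fi_def C_def D_def P_def .
qed

end
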